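(* There is a formula $A$ of $\mathsf{LTL}^{\ll}$ such that for every formula $B$ of $\mathsf{LTL}$ we have $\mathcal{L}_A \neq \mathcal{L}_B$.
   Context: Fix a set $\mathsf{Prop}$ of atomic propositions. Formulas of $\mathsf{LTL}^{\ll}$ are built from atomic propositions $P \in \mathsf{Prop}$ by $\lnot A$, $A \land B$, $\mathsf{X} A$, $A \mathbin{\mathsf{U}} B$ and $A \ll B$; formulas of $\mathsf{LTL}$ are those not containing $\ll$. A model $\sigma$ is an $\omega$-word $\sigma_0\sigma_1\sigma_2\ldots$ of sets of atomic propositions. Satisfaction is defined by: $\sigma,i \models P$ iff $P \in \sigma_i$; $\sigma,i\models \lnot A$ iff not $\sigma,i\models A$; $\sigma,i\models A\land B$ iff both hold; $\sigma,i\models \mathsf{X}A$ iff $\sigma,i+1\models A$; $\sigma,i\models A\mathbin{\mathsf{U}}B$ iff there is $j\ge i$ with $\sigma,j\models B$ and $\sigma,k\models A$ for all $i\le k<j$; $\sigma,i\models A\ll B$ iff for every $b$ there exists $j$ with $\mathrm{card}(A_\sigma^{i,j}) + b \le \mathrm{card}(B_\sigma^{i,j})$, where $A_\sigma^{i,j} := \{k \in \mathbb{N} : i \le k \le j,\ \sigma,k\models A\}$ (quantifiers over $b$, $j$ range over natural numbers). For a formula $A$ whose atomic propositions are $P_1,\dots,P_n$, its language is the $\omega$-language $\mathcal{L}_A := \{\sigma \in \Sigma^\omega : \sigma,0\models A\}$ over the alphabet $\Sigma := 2^{\{P_1,\dots,P_n\}}$. *)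

theory Defs
  imports Main
begin

text \<open>Formulas of LTL with the counting operator (written Ll A B for A << B),
  over atomic propositions of type 'p.\<close>

datatype 'p ltlc =
    Atom 'p
  | FNot "'p ltlc"
  | FAnd "'p ltlc" "'p ltlc"
  | FNext "'p ltlc"
  | FUntil "'p ltlc" "'p ltlc"
  | Ll "'p ltlc" "'p ltlc"

fun is_ltl :: "'p ltlc \<Rightarrow> bool" where
  "is_ltl (Atom P) = True"
| "is_ltl (FNot A) = is_ltl A"
| "is_ltl (FAnd A B) = (is_ltl A \<and> is_ltl B)"
| "is_ltl (FNext A) = is_ltl A"
| "is_ltl (FUntil A B) = (is_ltl A \<and> is_ltl B)"
| "is_ltl (Ll A B) = False"

fun atoms :: "'p ltlc \<Rightarrow> 'p set" where
  "atoms (Atom P) = {P}"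
| "atoms (FNot A) = atoms A"
| "atoms (FAnd A B) = atoms A \<union> atoms B"
| "atoms (FNext A) = atoms A"
| "atoms (FUntil A B) = atoms A \<union> atoms B"
| "atoms (Ll A B) = atoms A \<union> atoms B"

fun sat :: "(nat \<Rightarrow> 'p set) \<Rightarrow> nat \<Rightarrow> 'p ltlc \<Rightarrow> bool" where
  "sat \<sigma> i (Atom P) = (P \<in> \<sigma> i)"
| "sat \<sigma> i (FNot A) = (\<not> sat \<sigma> i A)"
| "sat \<sigma> i (FAnd A B) = (sat \<sigma> i A \<and> sat \<sigma> i B)"
| "sat \<sigma> i (FNext A) = sat \<sigma> (Suc i) A"
| "sat \<sigma> i (FUntil A B) =
     (\<exists>j\<ge>i. sat \<sigma> j B \<and> (\<forall>k. i \<le> k \<and> k < j \<longrightarrow> sat \<sigma> k A))"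
| "sat \<sigma> i (Ll A B) =
     (\<forall>b::nat. \<exists>j::nat.
        card {k. i \<le> k \<and> k \<le> j \<and> sat \<sigma> k A} + b
          \<le> card {k. i \<le> k \<and> k \<le> j \<and> sat \<sigma> k B})"

definition lang :: "'p ltlc \<Rightarrow> (nat \<Rightarrow> 'p set) set" where
  "lang A = {\<sigma>. (\<forall>i. \<sigma> i \<subseteq> atoms A) \<and> sat \<sigma> 0 A}"

end

theory Submission
  imports Defs
begin


fun nd :: "'p ltlc \<Rightarrow> nat" where
  "nd (Atom P) = 0"
| "nd (FNot A) = nd A"
| "nd (FAnd A B) = max (nd A) (nd B)"
| "nd (FNext A) = Suc (nd A)"
| "nd (FUntil A B) = max (nd A) (nd B)"
| "nd (Ll A B) = 0"

definition good :: "nat \<Rightarrow> (nat \<Rightarrow> 'p set) \<Rightarrow> (nat \<Rightarrow> 'p set) \<Rightarrow> (nat \<Rightarrow> nat) \<Rightarrow> bool" where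
"good K w1 w2 h \<longleftrightarrow> (\<forall>q. w2 q = w1 (h q)) \<and> (\<forall>x. h x \<le> h (Suc x) \<and> h (Suc x) \<le> Suc (h x))
   \<and> (\<forall>p. \<exists>q. p \<le> h q) \<and> (\<forall>q. h (Suc q) = h q \<longrightarrow> (\<forall>i\<le>K. w1 (h q + i) = w1 (h q)))"

lemma good_mono: "good K w1 w2 h \<Longrightarrow> K' \<le> K \<Longrightarrow> good K' w1 w2 h"
  unfolding good_def by auto

lemma ivt:
  assumes st: "\<forall>x. h x \<le> h (Suc x) \<and> h (Suc x) \<le> Suc (h x)"
  shows "a \<le> b \<Longrightarrow> h a \<le> m \<Longrightarrow> m \<le> h b \<Longrightarrow> \<exists>k. a \<le> k \<and> k \<le> b \<and> h k = (m::nat)"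
proof (induction b)
  case 0 then show ?case by auto
next
  case (Suc b)
  show ?case
  proof (cases "a \<le> b \<and> m \<le> h b")
    case True then show ?thesis using Suc by (meson le_Suc_eq)
  next
    case False
    then show ?thesis using Suc st[rule_format, of b] by (metis le_SucE le_antisym not_less_eq_eq order_refl)
  qed
qed

lemma stut:
  assumes IH: "\<And>w1 w2 h q. good (nd B) w1 w2 h \<Longrightarrow> sat w2 q B = sat w1 (h q) B"
    and c: "\<forall>i \<le> Suc (nd B). w (p+i) = w p"
  shows "sat w p B = sat w (Suc p) B"
proof -
  define w2 where "w2 = (\<lambda>x. if x \<le> p then w x else w (x-1))"
  define h1 where "h1 = (\<lambda>x::nat. if x \<le> p then x else x - 1)"
  define h2 where "h2 = (\<lambda>x::nat. if x \<le> Suc p then x else x - 1)"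
  have w1: "w (Suc p) = w p" using c[rule_format, of 1] by simp
  have g1: "good (nd B) w w2 h1" unfolding good_def
  proof (intro conjI allI impI)
    fix p' show "\<exists>q. p' \<le> h1 q" by (rule exI[of _ "Suc p'"]) (auto simp: h1_def)
  next
    fix q i assume "h1 (Suc q) = h1 q" "i \<le> nd B"
    then have "q = p" by (auto simp: h1_def split: if_splits)
    then show "w (h1 q + i) = w (h1 q)" using c \<open>i \<le> nd B\<close> by (auto simp: h1_def)
  qed (auto simp: h1_def w2_def)
  have g2: "good (nd B) w w2 h2" unfolding good_def
  proof (intro conjI allI impI)
    fix p' show "\<exists>q. p' \<le> h2 q" by (rule exI[of _ "Suc p'"]) (auto simp: h2_def)
  next
    fix q i assume "h2 (Suc q) = h2 q" "i \<le> nd B"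
    then have "q = Suc p" by (auto simp: h2_def split: if_splits)
    then show "w (h2 q + i) = w (h2 q)" using c \<open>i \<le> nd B\<close> w1
      by (auto simp: h2_def)
  next
    fix q show "w2 q = w (h2 q)"
    proof (cases "q = Suc p")
      case True then show ?thesis using w1 by (simp add: h2_def w2_def)
    qed (auto simp: h2_def w2_def)
  qed (auto simp: h2_def)
  have "sat w2 (Suc p) B = sat w p B" using IH[OF g1, of "Suc p"] by (simp add: h1_def)
  moreover have "sat w2 (Suc p) B = sat w (Suc p) B" using IH[OF g2, of "Suc p"] by (simp add: h2_def)
  ultimately show ?thesis by simp
qed

lemma L: "is_ltl B \<Longrightarrow> nd B \<le> K \<Longrightarrow> good K w1 w2 h \<Longrightarrow> sat w2 q B = sat w1 (h q) B"
proof (induction B arbitrary: K w1 w2 h q)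
  case (Atom x) then show ?case by (simp add: good_def)
next
  case (FNot B) then show ?case by simp
next
  case (FAnd B1 B2)
  have "sat w2 q B1 = sat w1 (h q) B1" using FAnd.IH(1)[of K w1 w2 h q] FAnd.prems by simp
  moreover have "sat w2 q B2 = sat w1 (h q) B2" using FAnd.IH(2)[of K w1 w2 h q] FAnd.prems by simp
  ultimately show ?case by simp
next
  case (FNext B)
  have g: "good K w1 w2 h" by fact
  have st: "h q \<le> h (Suc q) \<and> h (Suc q) \<le> Suc (h q)" using g by (simp add: good_def)
  have e1: "sat w2 (Suc q) B = sat w1 (h (Suc q)) B" using FNext.IH[of K w1 w2 h "Suc q"] FNext.prems by simp
  show ?case
  proof (cases "h (Suc q) = h q")
    case False then have "h (Suc q) = Suc (h q)" using st by simp
    then show ?thesis using e1 by simp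
  next
    case True
    have c: "\<forall>i \<le> Suc (nd B). w1 (h q + i) = w1 (h q)" using g True FNext.prems(2) by (auto simp: good_def)
    have "sat w1 (h q) B = sat w1 (Suc (h q)) B"
      by (rule stut[OF _ c]) (use FNext.IH[OF _ order_refl] FNext.prems(1) in auto)
    then show ?thesis using e1 True by simp
  qed
next
  case (FUntil B C)
  have g: "good K w1 w2 h" by fact
  have st: "\<forall>x. h x \<le> h (Suc x) \<and> h (Suc x) \<le> Suc (h x)" using g by (simp add: good_def)
  have mono: "mono h" using st by (simp add: mono_iff_le_Suc)
  have eB: "\<And>x. sat w2 x B = sat w1 (h x) B" using FUntil.IH(1)[of K w1 w2 h] FUntil.prems by simp
  have eC: "\<And>x. sat w2 x C = sat w1 (h x) C" using FUntil.IH(2)[of K w1 w2 h] FUntil.prems by simp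
  show ?case
  proof
    assume "sat w2 q (FUntil B C)"
    then obtain j where j: "j \<ge> q" "sat w2 j C" "\<forall>k. q \<le> k \<and> k < j \<longrightarrow> sat w2 k B" by auto
    have "h j \<ge> h q" using mono j(1) by (simp add: monoD)
    moreover have "sat w1 (h j) C" using j eC by simp
    moreover have "\<forall>m. h q \<le> m \<and> m < h j \<longrightarrow> sat w1 m B"
    proof (intro allI impI)
      fix m assume m: "h q \<le> m \<and> m < h j"
      then obtain k where k: "q \<le> k" "k \<le> j" "h k = m" using ivt[OF st, of q j m] j(1) by auto
      then have "k < j" using m by (metis order_less_irrefl le_neq_implies_less)
      then show "sat w1 m B" using j(3) k eB by auto
    qed
    ultimately show "sat w1 (h q) (FUntil B C)" by auto
  next
    assume "sat w1 (h q) (FUntil B C)"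
    then obtain j where j: "j \<ge> h q" "sat w1 j C" "\<forall>k. h q \<le> k \<and> k < j \<longrightarrow> sat w1 k B" by auto
    obtain x where x: "j \<le> h x" using g unfolding good_def by blast
    have "h x \<le> h (max x q)" using mono by (simp add: monoD)
    then obtain k0 where k0: "q \<le> k0" "h k0 = j" using ivt[OF st, of q "max x q" j] j(1) x by auto
    define j' where "j' = (LEAST k. q \<le> k \<and> h k = j)"
    have j': "q \<le> j'" "h j' = j" using LeastI[of "\<lambda>k. q \<le> k \<and> h k = j", OF conjI[OF k0]] by (auto simp: j'_def)
    have "sat w2 j' C" using eC j' j by simp
    moreover have "\<forall>k. q \<le> k \<and> k < j' \<longrightarrow> sat w2 k B"
    proof (intro allI impI)
      fix k assume k: "q \<le> k \<and> k < j'"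
      have "h k \<noteq> j" using k not_less_Least[of k "\<lambda>k. q \<le> k \<and> h k = j"] by (auto simp: j'_def)
      moreover have "h k \<le> j" using mono k j' by (metis less_imp_le monoD)
      moreover have "h q \<le> h k" using mono k by (simp add: monoD)
      ultimately show "sat w2 k B" using j(3) eB by auto
    qed
    ultimately show "sat w2 q (FUntil B C)" using j' by auto
  qed
next
  case (Ll B C) then show ?case by simp
qed



lemma pcount: "card {k. k < M*n \<and> f (k mod M)} = n * card {r. r < M \<and> f r}"
proof (induction n)
  case 0 then show ?case by simp
next
  case (Suc n)
  have "{k. k < M*Suc n \<and> f (k mod M)} = {k. k < M*n \<and> f (k mod M)} \<union> (\<lambda>r. M*n + r) ` {r. r < M \<and> f r}"
  proof (intro set_eqI iffI)
    fix k assume k: "k \<in> {k. k < M*Suc n \<and> f (k mod M)}"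
    show "k \<in> {k. k < M*n \<and> f (k mod M)} \<union> (\<lambda>r. M*n + r) ` {r. r < M \<and> f r}"
    proof (cases "k < M*n")
      case False
      then have "k = M*n + (k - M*n)" "k - M*n < M" using k by auto
      moreover have "k mod M = k - M*n" using k False
        by (metis (no_types, lifting) \<open>k - M*n < M\<close> \<open>k = M*n + (k - M*n)\<close> mod_less mod_mult_self3 mult.commute)
      ultimately show ?thesis using k by (auto intro!: image_eqI[of _ _ "k - M*n"])
    qed (use k in auto)
  qed auto
  moreover have "card ((\<lambda>r. M*n + r) ` {r. r < M \<and> f r}) = card {r. r < M \<and> f r}"
    by (rule card_image) (simp add: inj_on_def)
  moreover have "{k. k < M*n \<and> f (k mod M)} \<inter> (\<lambda>r. M*n + r) ` {r. r < M \<and> f r} = {}" by auto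
  ultimately show ?case using Suc by (simp add: card_Un_disjoint)
qed



lemma w2_in:
  fixes P :: 'p and N :: nat
  defines "w2 \<equiv> (\<lambda>x. if x mod (2*N+1) \<le> N then {P} else {})"
  shows "sat w2 0 (Ll (FNot (Atom P)) (Atom P))"
proof (simp, intro allI)
  fix b
  let ?M = "2*N+1"
  let ?j = "?M * Suc b - 1"
  have e1: "{k. k \<le> ?j \<and> P \<notin> w2 k} = {k. k < ?M * Suc b \<and> \<not> (k mod ?M \<le> N)}"
    by (auto simp: w2_def)
  have e2: "{k. k \<le> ?j \<and> P \<in> w2 k} = {k. k < ?M * Suc b \<and> (k mod ?M \<le> N)}"
    by (auto simp: w2_def)
  have c1: "card {r. r < ?M \<and> \<not> r \<le> N} = N"
  proof -
    have "{r. r < ?M \<and> \<not> r \<le> N} = {N<..<?M}" by auto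
    then show ?thesis by simp
  qed
  have c2: "card {r. r < ?M \<and> r \<le> N} = Suc N"
  proof -
    have "{r. r < ?M \<and> r \<le> N} = {..N}" by auto
    then show ?thesis by simp
  qed
  have "card {k. k \<le> ?j \<and> P \<notin> w2 k} + b \<le> card {k. k \<le> ?j \<and> P \<in> w2 k}"
    unfolding e1 e2 pcount[of ?M "Suc b" "\<lambda>r. \<not> r \<le> N"] pcount[of ?M "Suc b" "\<lambda>r. r \<le> N"] c1 c2 by simp
  then show "\<exists>j. card {k. k \<le> j \<and> P \<notin> w2 k} + b \<le> card {k. k \<le> j \<and> P \<in> w2 k}" by blast
qed

lemma w1_out:
  fixes P :: 'p and N :: nat
  assumes N: "0 < N"
  defines "w1 \<equiv> (\<lambda>x. if x mod (2*N) < N then {P} else {})"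
  shows "\<not> sat w1 0 (Ll (FNot (Atom P)) (Atom P))"
proof (simp, intro exI[of _ "Suc N"] allI)
  fix j
  let ?M = "2*N"
  define n where "n = j div ?M"
  have jm: "j mod ?M < ?M" using N by simp
  have je: "j = ?M*n + j mod ?M" by (simp add: n_def)
  have jl: "j < ?M * Suc n" using jm je by (simp add: algebra_simps)
  have jg: "?M * n \<le> j" unfolding n_def by (simp add: mult.commute)
  have c1: "card {r. r < ?M \<and> \<not> r < N} = N"
  proof -
    have "{r. r < ?M \<and> \<not> r < N} = {N..<?M}" by auto
    then show ?thesis by simp
  qed
  have c2: "card {r. r < ?M \<and> r < N} = N"
  proof -
    have "{r. r < ?M \<and> r < N} = {..<N}" by auto
    then show ?thesis by simp
  qed
  have "card {k. k \<le> j \<and> P \<in> w1 k} \<le> card {k. k < ?M * Suc n \<and> k mod ?M < N}"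
    by (rule card_mono) (use jl in \<open>auto simp: w1_def split: if_splits\<close>)
  also have "\<dots> = Suc n * N" unfolding pcount[of ?M "Suc n" "\<lambda>r. r < N"] c2 by simp
  finally have a: "card {k. k \<le> j \<and> P \<in> w1 k} \<le> Suc n * N" .
  have "n * N = card {k. k < ?M * n \<and> \<not> k mod ?M < N}" unfolding pcount[of ?M n "\<lambda>r. \<not> r < N"] c1 by simp
  also have "\<dots> \<le> card {k. k \<le> j \<and> P \<notin> w1 k}"
    by (rule card_mono) (use jg in \<open>auto simp: w1_def split: if_splits\<close>)
  finally have b: "n * N \<le> card {k. k \<le> j \<and> P \<notin> w1 k}" .
  show "\<not> card {k. k \<le> j \<and> P \<notin> w1 k} + Suc N \<le> card {k. k \<le> j \<and> P \<in> w1 k}"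
    using a b by simp
qed



lemma a1: fixes M d r :: nat shows "r < M \<Longrightarrow> (M*d + r) div M = d"
  by simp
lemma a2: fixes M d r :: nat shows "r < M \<Longrightarrow> (M*d + r) mod M = r"
  by simp
lemma hform: fixes N d r :: nat shows "r < 2*N+1 \<Longrightarrow> ((2*N+1)*d + r) div (2*N+1) * (2*N) + (((2*N+1)*d + r) mod (2*N+1) - 1) = d*(2*N) + (r - 1)"
  using a1[of r "2*N+1" d] a2[of r "2*N+1" d] by (simp only:)

lemma good_ex:
  fixes P :: 'p and N K :: nat
  assumes N: "K < N"
  defines "w1 \<equiv> (\<lambda>x. if x mod (2*N) < N then {P} else {})"
    and "w2 \<equiv> (\<lambda>x. if x mod (2*N+1) \<le> N then {P} else {})"
    and "h \<equiv> (\<lambda>x. x div (2*N+1) * (2*N) + (x mod (2*N+1) - 1))"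
  shows "good K w1 w2 h"
  unfolding good_def
proof (intro conjI[OF allI] allI impI)
  let ?M = "2*N+1"
  have dec: "\<And>x. x = ?M * (x div ?M) + x mod ?M \<and> x mod ?M < ?M" using mult_div_mod_eq[of ?M] by simp
  have hf: "\<And>d r. r < ?M \<Longrightarrow> h (?M*d + r) = d*(2*N) + (r - 1)" unfolding h_def by (rule hform)
  fix q
  obtain d r where q: "q = ?M*d + r" "r < ?M" using dec by blast
  have w1f: "\<And>d c. c < 2*N \<Longrightarrow> w1 (d*(2*N) + c) = (if c < N then {P} else {})"
    unfolding w1_def using a2[of c "2*N" d] by (simp add: mult.commute)
  have "w2 q = (if r \<le> N then {P} else {})" unfolding w2_def q
    using q(2) a2[of r "2*N+1" d] by simp
  moreover have "w1 (h q) = (if r - 1 < N then {P} else {})" unfolding q hf[OF q(2)]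
    using q(2) N by (subst w1f) auto
  ultimately show "w2 q = w1 (h q)" using N by auto
next
  let ?M = "2*N+1"
  have dec: "\<And>x. x = ?M * (x div ?M) + x mod ?M \<and> x mod ?M < ?M" using mult_div_mod_eq[of ?M] by simp
  have hf: "\<And>d r. r < ?M \<Longrightarrow> h (?M*d + r) = d*(2*N) + (r - 1)" unfolding h_def by (rule hform)
  fix x
  obtain d r where q: "x = ?M*d + r" "r < ?M" using dec by blast
  show "h x \<le> h (Suc x) \<and> h (Suc x) \<le> Suc (h x)"
  proof (cases "r = 2*N")
    case True
    then have "Suc x = ?M*(Suc d) + 0" using q by simp
    then have "h (Suc x) = Suc d * (2*N)" using hf[of 0 "Suc d"] by simp
    moreover have "h x = d*(2*N) + (2*N - 1)" using hf q True by simp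
    ultimately show ?thesis using N by auto
  next
    case False
    then have "Suc x = ?M*d + Suc r" "Suc r < ?M" using q by auto
    then have "h (Suc x) = d*(2*N) + r" using hf[of "Suc r" d] by simp
    moreover have "h x = d*(2*N) + (r - 1)" using hf q by simp
    ultimately show ?thesis by auto
  qed
next
  let ?M = "2*N+1"
  have hf: "\<And>d r. r < ?M \<Longrightarrow> h (?M*d + r) = d*(2*N) + (r - 1)" unfolding h_def by (rule hform)
  fix p
  have "h (?M*p + 0) = p*(2*N)" using hf[of 0 p] by simp
  moreover have "p \<le> p*(2*N)" using N by simp
  ultimately show "\<exists>q. p \<le> h q" by (metis add_0_right)
next
  let ?M = "2*N+1"
  have dec: "\<And>x. x = ?M * (x div ?M) + x mod ?M \<and> x mod ?M < ?M" using mult_div_mod_eq[of ?M] by simp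
  have hf: "\<And>d r. r < ?M \<Longrightarrow> h (?M*d + r) = d*(2*N) + (r - 1)" unfolding h_def by (rule hform)
  have w1f: "\<And>d c. c < 2*N \<Longrightarrow> w1 (d*(2*N) + c) = (if c < N then {P} else {})"
    unfolding w1_def using a2[of c "2*N" d] by (simp add: mult.commute)
  fix q i
  assume st: "h (Suc q) = h q" and i: "i \<le> K"
  obtain d r where q: "q = ?M*d + r" "r < ?M" using dec by blast
  have r0: "r = 0"
  proof (rule ccontr)
    assume r: "r \<noteq> 0"
    show False
    proof (cases "r = 2*N")
      case True
      then have "Suc q = ?M*(Suc d) + 0" using q by simp
      then have "h (Suc q) = Suc d * (2*N)" using hf[of 0 "Suc d"] by simp
      moreover have "h q = d*(2*N) + (2*N - 1)" using hf q True by simp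
      ultimately show False using N st by auto
    next
      case False
      then have "Suc q = ?M*d + Suc r" "Suc r < ?M" using q by auto
      then have "h (Suc q) = d*(2*N) + r" using hf[of "Suc r" d] by simp
      moreover have "h q = d*(2*N) + (r - 1)" using hf q by simp
      ultimately show False using st r by auto
    qed
  qed
  have hq: "h q = d*(2*N)" using hf[of 0 d] q r0 by simp
  show "w1 (h q + i) = w1 (h q)" unfolding hq
    using w1f[of i d] w1f[of 0 d] i N by simp
qed



theorem mainTheorem2:
  shows "\<exists>A :: 'p ltlc. \<forall>B. is_ltl B \<longrightarrow> lang A \<noteq> lang B"
proof (intro exI allI impI)
  define P where "P = (undefined :: 'p)"
  let ?A = "Ll (FNot (Atom P)) (Atom P)"
  fix B :: "'p ltlc"
  assume lt: "is_ltl B"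
  show "lang ?A \<noteq> lang B"
  proof
    assume eq: "lang ?A = lang B"
    define N where "N = Suc (nd B)"
    define w1 where "w1 = (\<lambda>x. if x mod (2*N) < N then {P} else ({}::'p set))"
    define w2 where "w2 = (\<lambda>x. if x mod (2*N+1) \<le> N then {P} else ({}::'p set))"
    define h where "h = (\<lambda>x::nat. x div (2*N+1) * (2*N) + (x mod (2*N+1) - 1))"
    have g: "good (nd B) w1 w2 h" unfolding w1_def w2_def h_def by (rule good_ex) (simp add: N_def)
    have "w2 \<in> lang ?A" using w2_in[of N P] unfolding lang_def w2_def by auto
    then have w2B: "w2 \<in> lang B" using eq by simp
    then have s2: "sat w2 0 B" and "w2 0 \<subseteq> atoms B" unfolding lang_def by auto
    then have Pa: "P \<in> atoms B" by (simp add: w2_def)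
    have "sat w1 0 B" using L[OF lt order_refl g, of 0] s2 by (simp add: h_def)
    moreover have "\<forall>i. w1 i \<subseteq> atoms B" using Pa by (simp add: w1_def)
    ultimately have "w1 \<in> lang ?A" using eq by (simp add: lang_def)
    then have "sat w1 0 ?A" by (simp add: lang_def)
    moreover have "\<not> sat w1 0 ?A" unfolding w1_def by (rule w1_out) (simp add: N_def)
    ultimately show False by simp
  qed
qed


end
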